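(* Let $\mathcal N$ be a normal network on $X$. If $\mathcal N$ has at least one reticulation and $|X|\ge 4$, or $\mathcal N$ has at least two reticulations, or $|X|\ge 5$, then $\mathcal N$ displays at least one quad.
   Context: Phylogenetic network on $X$ (rooted, binary): rooted acyclic digraph without parallel arcs; root has in-degree $0$, out-degree $2$; leaves (out-degree $0$) have in-degree $1$ and form $X$; other vertices are tree vertices (in-degree $1$, out-degree $2$) or reticulations (in-degree $2$, out-degree $1$). A reticulation arc $(u,v)$ is a shortcut if another directed path from $u$ to $v$ exists. Tree-child: every non-leaf vertex has a child that is a tree vertex or leaf; normal: tree-child with no shortcuts. A quad is a caterpillar on four leaves, i.e. a rooted binary phylogenetic tree $(x_1,x_2,x_3,x_4)$ in which $x_1,x_2$ share a parent $p$, the parent of $x_3$ is the parent of $p$, and the parent of $x_4$ is the parent of the parent of $x_3$. The network displays a tree on a subset of $X$ if the tree can be obtained from the network by deleting arcs and vertices and suppressing in-degree-one out-degree-one vertices. *)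

theory Defs
  imports Main
begin

text \<open>A rooted digraph is given by a vertex set V, an arc set A \<subseteq> V \<times> V
  (a set of pairs, so there are no parallel arcs) and a root r.\<close>

definition indeg :: "('v \<times> 'v) set \<Rightarrow> 'v \<Rightarrow> nat" where
  "indeg A v = card {u. (u, v) \<in> A}"

definition outdeg :: "('v \<times> 'v) set \<Rightarrow> 'v \<Rightarrow> nat" where
  "outdeg A v = card {w. (v, w) \<in> A}"

definition is_tree_vertex :: "'v set \<Rightarrow> ('v \<times> 'v) set \<Rightarrow> 'v \<Rightarrow> bool" where
  "is_tree_vertex V A v \<longleftrightarrow> v \<in> V \<and> indeg A v = 1 \<and> outdeg A v = 2"

definition is_reticulation :: "'v set \<Rightarrow> ('v \<times> 'v) set \<Rightarrow> 'v \<Rightarrow> bool" where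
  "is_reticulation V A v \<longleftrightarrow> v \<in> V \<and> indeg A v = 2 \<and> outdeg A v = 1"

definition reticulations :: "'v set \<Rightarrow> ('v \<times> 'v) set \<Rightarrow> 'v set" where
  "reticulations V A = {v. is_reticulation V A v}"

definition phylo_network :: "'v set \<Rightarrow> ('v \<times> 'v) set \<Rightarrow> 'v \<Rightarrow> 'v set \<Rightarrow> bool" where
  "phylo_network V A r X \<longleftrightarrow>
     finite V \<and> A \<subseteq> V \<times> V \<and> acyclic A \<and>
     r \<in> V \<and> indeg A r = 0 \<and> outdeg A r = 2 \<and>
     X = {v \<in> V. outdeg A v = 0} \<and>
     (\<forall>x \<in> X. indeg A x = 1) \<and>
     (\<forall>v \<in> V - X - {r}. is_tree_vertex V A v \<or> is_reticulation V A v)"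

definition is_shortcut :: "'v set \<Rightarrow> ('v \<times> 'v) set \<Rightarrow> 'v \<times> 'v \<Rightarrow> bool" where
  "is_shortcut V A e \<longleftrightarrow> e \<in> A \<and> is_reticulation V A (snd e) \<and> e \<in> (A - {e})\<^sup>+"

definition tree_child :: "'v set \<Rightarrow> ('v \<times> 'v) set \<Rightarrow> 'v \<Rightarrow> 'v set \<Rightarrow> bool" where
  "tree_child V A r X \<longleftrightarrow> phylo_network V A r X \<and>
     (\<forall>v \<in> V - X. \<exists>w. (v, w) \<in> A \<and> (is_tree_vertex V A w \<or> w \<in> X))"

definition normal_network :: "'v set \<Rightarrow> ('v \<times> 'v) set \<Rightarrow> 'v \<Rightarrow> 'v set \<Rightarrow> bool" where
  "normal_network V A r X \<longleftrightarrow> tree_child V A r X \<and> (\<forall>e. \<not> is_shortcut V A e)"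

definition dpath :: "('v \<times> 'v) set \<Rightarrow> 'v \<Rightarrow> 'v \<Rightarrow> 'v list \<Rightarrow> bool" where
  "dpath A u w P \<longleftrightarrow> P \<noteq> [] \<and> hd P = u \<and> last P = w \<and> distinct P \<and>
     (\<forall>i. Suc i < length P \<longrightarrow> (P ! i, P ! Suc i) \<in> A)"

definition interior :: "'v list \<Rightarrow> 'v set" where
  "interior P = set (tl (butlast P))"

text \<open>The network displays the quad (caterpillar) (x1,x2,x3,x4): some subgraph of the
  network is a subdivision of the tree with internal vertices s (root), q, p and arcs
  p->x1, p->x2, q->p, q->x3, s->q, s->x4. Equivalently, the quad is obtained from the
  network by deleting arcs and vertices and suppressing in-degree-one out-degree-one
  vertices: the images of the tree vertices are distinct and each tree arc is realised
  by a directed path, these paths being internally vertex-disjoint from each other and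
  from the images of the tree vertices.\<close>
definition displays_quad :: "'v set \<Rightarrow> ('v \<times> 'v) set \<Rightarrow> 'v set \<Rightarrow> 'v \<Rightarrow> 'v \<Rightarrow> 'v \<Rightarrow> 'v \<Rightarrow> bool" where
  "displays_quad V A X x1 x2 x3 x4 \<longleftrightarrow>
     {x1, x2, x3, x4} \<subseteq> X \<and>
     (\<exists>s q p P1 P2 P3 P4 P5 P6.
        s \<in> V \<and> q \<in> V \<and> p \<in> V \<and>
        distinct [s, q, p, x1, x2, x3, x4] \<and>
        dpath A p x1 P1 \<and> dpath A p x2 P2 \<and> dpath A q p P3 \<and>
        dpath A q x3 P4 \<and> dpath A s q P5 \<and> dpath A s x4 P6 \<and>
        (let Ps = [P1, P2, P3, P4, P5, P6] in
          (\<forall>i < 6. \<forall>j < 6. i \<noteq> j \<longrightarrow> interior (Ps ! i) \<inter> interior (Ps ! j) = {}) \<and>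
          (\<forall>i < 6. interior (Ps ! i) \<inter> {s, q, p, x1, x2, x3, x4} = {})))"

end

theory Submission
  imports Defs
begin

locale nn =
  fixes V :: "'v set" and A :: "('v \<times> 'v) set" and r :: 'v and X :: "'v set"
  assumes nn: "normal_network V A r X"
begin

lemma finV: "finite V" and AV: "A \<subseteq> V \<times> V" and acyc: "acyclic A" and rV: "r \<in> V"
  and r0: "indeg A r = 0" and r2: "outdeg A r = 2" and Xdef: "X = {v \<in> V. outdeg A v = 0}"
  and X1: "\<And>x. x \<in> X \<Longrightarrow> indeg A x = 1"
  and kinds: "\<And>v. v \<in> V - X - {r} \<Longrightarrow> is_tree_vertex V A v \<or> is_reticulation V A v"
  and tc: "\<And>v. v \<in> V - X \<Longrightarrow> \<exists>w. (v, w) \<in> A \<and> (is_tree_vertex V A w \<or> w \<in> X)"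
  and nosc: "\<And>e. \<not> is_shortcut V A e"
  using nn unfolding normal_network_def tree_child_def phylo_network_def by blast+

lemma finA: "finite A" using finV AV finite_subset by blast

lemma fin_par: "finite {u. (u, v) \<in> A}"
  by (rule finite_subset[OF _ finV]) (use AV in auto)
lemma fin_ch: "finite {w. (v, w) \<in> A}"
  by (rule finite_subset[OF _ finV]) (use AV in auto)

lemma inV1: "(u,v) \<in> A \<Longrightarrow> u \<in> V" and inV2: "(u,v) \<in> A \<Longrightarrow> v \<in> V" using AV by auto

lemma noloop: "(x,y) \<in> A\<^sup>+ \<Longrightarrow> (y,x) \<in> A\<^sup>* \<Longrightarrow> False"
  using acyc unfolding acyclic_def by (meson rtrancl_trancl_trancl)

lemma card1_eq: "card S = 1 \<Longrightarrow> a \<in> S \<Longrightarrow> b \<in> S \<Longrightarrow> a = b"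
  by (metis One_nat_def card_1_singleton_iff singletonD)

lemma indeg1_unique: "indeg A v = 1 \<Longrightarrow> (u,v)\<in>A \<Longrightarrow> (u',v)\<in>A \<Longrightarrow> u = u'"
  unfolding indeg_def using card1_eq[of "{u. (u, v) \<in> A}"] by blast

lemma outdeg1_unique: "outdeg A v = 1 \<Longrightarrow> (v,u)\<in>A \<Longrightarrow> (v,u')\<in>A \<Longrightarrow> u = u'"
  unfolding outdeg_def using card1_eq[of "{w. (v, w) \<in> A}"] by blast

lemma outdeg2_other: "outdeg A v = 2 \<Longrightarrow> (v,c)\<in>A \<Longrightarrow> \<exists>c'. (v,c') \<in> A \<and> c' \<noteq> c"
  unfolding outdeg_def by (auto simp: card_2_iff)

lemma outdeg2_at_most: "outdeg A v = 2 \<Longrightarrow> (v,c1)\<in>A \<Longrightarrow> (v,c2)\<in>A \<Longrightarrow> (v,c3)\<in>A \<Longrightarrow>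
   c1 = c2 \<or> c1 = c3 \<or> c2 = c3"
  unfolding outdeg_def card_2_iff
proof -
  assume "\<exists>x y. {w. (v, w) \<in> A} = {x, y} \<and> x \<noteq> y" "(v,c1)\<in>A" "(v,c2)\<in>A" "(v,c3)\<in>A"
  then obtain x y where e: "{w. (v, w) \<in> A} = {x, y}" by blast
  hence "c1 \<in> {x,y}" "c2 \<in> {x,y}" "c3 \<in> {x,y}" using \<open>(v,c1)\<in>A\<close> \<open>(v,c2)\<in>A\<close> \<open>(v,c3)\<in>A\<close>
    by (metis mem_Collect_eq)+
  thus ?thesis by blast
qed

lemma indeg_ge2: "(u,v)\<in>A \<Longrightarrow> (u',v)\<in>A \<Longrightarrow> u\<noteq>u' \<Longrightarrow> indeg A v \<ge> 2"
proof -
  assume a: "(u,v)\<in>A" "(u',v)\<in>A" "u\<noteq>u'"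
  have "card {u,u'} \<le> card {u. (u, v) \<in> A}" by (rule card_mono[OF fin_par]) (use a in auto)
  thus ?thesis using a unfolding indeg_def by simp
qed

lemma has_par_not_r: "(u,v) \<in> A \<Longrightarrow> v \<noteq> r"
proof
  assume "(u,v)\<in>A" "v = r"
  hence "{u. (u, r) \<in> A} \<noteq> {}" by auto
  with r0 fin_par show False unfolding indeg_def by auto
qed

lemma has_child_not_X: "(u,v) \<in> A \<Longrightarrow> u \<notin> X"
proof
  assume a: "(u,v)\<in>A" "u \<in> X"
  hence "{w. (u, w) \<in> A} \<noteq> {}" by auto
  with a fin_ch Xdef show False unfolding outdeg_def by auto
qed

lemma ret_deg: "is_reticulation V A h \<Longrightarrow> indeg A h = 2 \<and> outdeg A h = 1 \<and> h \<in> V"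
  unfolding is_reticulation_def by auto
lemma tree_deg: "is_tree_vertex V A h \<Longrightarrow> indeg A h = 1 \<and> outdeg A h = 2 \<and> h \<in> V"
  unfolding is_tree_vertex_def by auto

lemma two_par_ret: "(u,v)\<in>A \<Longrightarrow> (u',v)\<in>A \<Longrightarrow> u\<noteq>u' \<Longrightarrow> is_reticulation V A v"
proof -
  assume a: "(u,v)\<in>A" "(u',v)\<in>A" "u\<noteq>u'"
  have d: "indeg A v \<ge> 2" by (rule indeg_ge2[OF a])
  have "v \<in> V" using a inV2 by auto
  moreover have "v \<noteq> r" using has_par_not_r a by auto
  moreover have "v \<notin> X" using X1 d by force
  ultimately have "is_tree_vertex V A v \<or> is_reticulation V A v" using kinds by auto
  thus ?thesis using d tree_deg by force
qed

lemma avoid: "(u,v) \<in> A\<^sup>+ \<Longrightarrow> (x,v) \<notin> A\<^sup>* \<Longrightarrow> (u,v) \<in> (A - {(u,x)})\<^sup>+"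
proof (induction rule: trancl_induct)
  case (base y)
  then have "y \<noteq> x" by auto
  with base show ?case by auto
next
  case (step y z)
  have "(x,y) \<notin> A\<^sup>*" using step by (meson rtrancl.rtrancl_into_rtrancl)
  with step have "(u,y) \<in> (A - {(u,x)})\<^sup>+" by auto
  moreover have "z \<noteq> x" using step by auto
  ultimately show ?case using step by (meson DiffI singletonD prod.inject trancl.trancl_into_trancl)
qed

lemma NS2: "(u,x)\<in>A \<Longrightarrow> (v,x)\<in>A \<Longrightarrow> u \<noteq> v \<Longrightarrow> (u,v) \<in> A\<^sup>+ \<Longrightarrow> False"
proof -
  assume a: "(u,x)\<in>A" "(v,x)\<in>A" "u \<noteq> v" "(u,v) \<in> A\<^sup>+"
  have ret: "is_reticulation V A x" by (rule two_par_ret[OF a(1,2,3)])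
  have "(x,v) \<notin> A\<^sup>*" using a noloop by blast
  hence "(u,v) \<in> (A - {(u,x)})\<^sup>+" using avoid a by auto
  moreover have "(v,x) \<in> A - {(u,x)}" using a by auto
  ultimately have "(u,x) \<in> (A - {(u,x)})\<^sup>+" by (rule trancl_into_trancl)
  hence "is_shortcut V A (u,x)" using ret a unfolding is_shortcut_def by auto
  thus False using nosc by blast
qed

inductive tp :: "'v \<Rightarrow> 'v list \<Rightarrow> bool" where
  tp_leaf: "x \<in> X \<Longrightarrow> tp x [x]"
| tp_step: "(x,w) \<in> A \<Longrightarrow> indeg A w = 1 \<Longrightarrow> tp w T \<Longrightarrow> x \<notin> set T \<Longrightarrow> tp x (x # T)"

lemma tp_hd: "tp x T \<Longrightarrow> T \<noteq> [] \<and> hd T = x"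
  by (induction rule: tp.induct) auto

lemma tp_last: "tp x T \<Longrightarrow> last T \<in> X"
  by (induction rule: tp.induct) (auto dest: tp_hd)

lemma tp_distinct: "tp x T \<Longrightarrow> distinct T"
  by (induction rule: tp.induct) auto

lemma tp_reach: "tp x T \<Longrightarrow> v \<in> set T \<Longrightarrow> (x,v) \<in> A\<^sup>*"
proof (induction rule: tp.induct)
  case (tp_leaf x) then show ?case by simp
next
  case (tp_step x w T)
  then show ?case by (auto intro: converse_rtrancl_into_rtrancl)
qed

lemma tp_par: "tp x T \<Longrightarrow> v \<in> set T \<Longrightarrow> v \<noteq> x \<Longrightarrow> indeg A v = 1 \<and> (\<forall>u. (u,v)\<in>A \<longrightarrow> u \<in> set T)"
proof (induction rule: tp.induct)
  case (tp_leaf x) then show ?case by simp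
next
  case (tp_step x w T)
  have hw: "hd T = w" "T \<noteq> []" using tp_hd[OF tp_step(3)] by auto
  show ?case
  proof (cases "v = w")
    case True
    then have "w \<in> set T" using hw by (metis list.set_sel(1))
    then show ?thesis using True tp_step indeg1_unique[of w] by auto
  next
    case False
    then show ?thesis using tp_step by auto
  qed
qed

lemma tp_dpath: "tp x T \<Longrightarrow> dpath A x (last T) T"
proof (induction rule: tp.induct)
  case (tp_leaf x) then show ?case unfolding dpath_def by simp
next
  case (tp_step x w T)
  have hw: "hd T = w" "T \<noteq> []" using tp_hd[OF tp_step(3)] by auto
  have d: "distinct (x # T)" using tp_distinct[OF tp_step(3)] tp_step by auto
  have "\<forall>i. Suc i < length (x # T) \<longrightarrow> ((x # T) ! i, (x # T) ! Suc i) \<in> A"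
  proof (intro allI impI)
    fix i assume i: "Suc i < length (x # T)"
    show "((x # T) ! i, (x # T) ! Suc i) \<in> A"
    proof (cases i)
      case 0 then show ?thesis using hw tp_step(1) by (simp add: hd_conv_nth)
    next
      case (Suc j) then show ?thesis using i tp_step(5) unfolding dpath_def by auto
    qed
  qed
  then show ?case using d hw unfolding dpath_def by auto
qed

lemma tp_exists: "x \<in> V \<Longrightarrow> \<exists>T. tp x T"
proof -
  have wf: "wf (A\<inverse>)" using finA acyc by (simp add: wf_iff_acyclic_if_finite)
  show "x \<in> V \<Longrightarrow> \<exists>T. tp x T"
  proof (induction x rule: wf_induct[OF wf])
    case (1 x)
    show ?case
    proof (cases "x \<in> X")
      case True then show ?thesis using tp_leaf by blast
    next
      case False
      then obtain w where w: "(x,w) \<in> A" "is_tree_vertex V A w \<or> w \<in> X" using tc 1(2) by blast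
      have "w \<in> V" using w inV2 by auto
      then obtain T where T: "tp w T" using 1(1) w by blast
      have iw: "indeg A w = 1" using w X1 tree_deg by auto
      have "x \<notin> set T"
      proof
        assume "x \<in> set T"
        then have "(w,x) \<in> A\<^sup>*" using tp_reach[OF T] by auto
        then show False using w noloop by blast
      qed
      then show ?thesis using tp_step[OF w(1) iw T] by blast
    qed
  qed
qed

lemma tp_U: assumes T: "tp x T" shows "(z,v) \<in> A\<^sup>* \<Longrightarrow> v \<in> set T \<Longrightarrow> (z,x) \<in> A\<^sup>* \<or> z \<in> set T"
proof (induction rule: rtrancl_induct)
  case base then show ?case by simp
next
  case (step u v)
  show ?case
  proof (cases "v = x")
    case True then show ?thesis using step by auto
  next
    case False
    then have "u \<in> set T" using tp_par[OF T step(4)] step(2) by auto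
    then show ?thesis using step by auto
  qed
qed

lemma tp_disj: "tp x Tx \<Longrightarrow> tp y Ty \<Longrightarrow> x \<noteq> y \<Longrightarrow> x \<notin> set Ty \<Longrightarrow> y \<notin> set Tx \<Longrightarrow> set Tx \<inter> set Ty = {}"
proof (rule ccontr)
  assume a: "tp x Tx" "tp y Ty" "x \<noteq> y" "x \<notin> set Ty" "y \<notin> set Tx" "set Tx \<inter> set Ty \<noteq> {}"
  then obtain w where w: "w \<in> set Tx" "w \<in> set Ty" by blast
  have "(y,x) \<in> A\<^sup>*" using tp_U[OF a(1) tp_reach[OF a(2) w(2)] w(1)] a by auto
  moreover have "(x,y) \<in> A\<^sup>*" using tp_U[OF a(2) tp_reach[OF a(1) w(1)] w(2)] a by auto
  ultimately show False using a(3) noloop by (meson rtranclD)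
qed

lemma tp_notin_par: "tp y Ty \<Longrightarrow> x \<noteq> y \<Longrightarrow> (u,x) \<in> A \<Longrightarrow> u \<notin> set Ty \<Longrightarrow> x \<notin> set Ty"
  using tp_par by blast

lemma tp_notin_ret: "tp y Ty \<Longrightarrow> x \<noteq> y \<Longrightarrow> is_reticulation V A x \<Longrightarrow> x \<notin> set Ty"
  using tp_par ret_deg by fastforce

lemma tp_notin_anc: "tp y Ty \<Longrightarrow> (x,y) \<in> A\<^sup>+ \<Longrightarrow> x \<notin> set Ty"
  using tp_reach noloop by blast

lemma dpath_cons: "(u,x) \<in> A \<Longrightarrow> u \<notin> set T \<Longrightarrow> dpath A x w T \<Longrightarrow> dpath A u w (u # T)"
  unfolding dpath_def
proof (elim conjE, intro conjI)
  assume a: "(u,x) \<in> A" "u \<notin> set T" "T \<noteq> []" "hd T = x" "last T = w" "distinct T"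
    "\<forall>i. Suc i < length T \<longrightarrow> (T ! i, T ! Suc i) \<in> A"
  show "\<forall>i. Suc i < length (u # T) \<longrightarrow> ((u # T) ! i, (u # T) ! Suc i) \<in> A"
  proof (intro allI impI)
    fix i assume i: "Suc i < length (u # T)"
    show "((u # T) ! i, (u # T) ! Suc i) \<in> A"
    proof (cases i)
      case 0 then show ?thesis using a by (simp add: hd_conv_nth)
    next
      case (Suc j) then show ?thesis using i a by auto
    qed
  qed
qed auto

lemma hop: "(u,c) \<in> A \<Longrightarrow> c = v \<or> (c,v) \<in> A \<Longrightarrow>
   \<exists>P. dpath A u v P \<and> interior P = (if c = v then {} else {c})"
proof -
  assume a: "(u,c) \<in> A" "c = v \<or> (c,v) \<in> A"
  have uc: "u \<noteq> c" using a(1) noloop by blast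
  show ?thesis
  proof (cases "c = v")
    case True
    have "dpath A u v [u,v]" using a True uc unfolding dpath_def by auto
    then show ?thesis using True unfolding interior_def by auto
  next
    case False
    then have cv: "(c,v) \<in> A" using a by auto
    have "u \<noteq> v" using a(1) cv noloop by (meson r_into_rtrancl trancl.intros(1))
    then have "dpath A u v [u,c,v]" using a(1) cv uc False unfolding dpath_def
      by (auto simp: less_Suc_eq nth_Cons split: nat.splits)
    then show ?thesis using False unfolding interior_def by auto
  qed
qed

lemma int_cons: "T \<noteq> [] \<Longrightarrow> interior (u # T) = set (butlast T)"
  unfolding interior_def by simp

lemma butlast_facts: "T \<noteq> [] \<Longrightarrow> distinct T \<Longrightarrow> last T \<notin> set (butlast T) \<and> set (butlast T) \<subseteq> set T \<and> last T \<in> set T"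
  by (metis append_butlast_last_id distinct_append in_set_butlastD last_in_set not_distinct_conv_prefix subsetI)

lemma dj_ne: "S \<inter> T = {} \<Longrightarrow> x \<in> S \<Longrightarrow> y \<in> T \<Longrightarrow> x \<noteq> y" by blast

lemma all6: "(\<forall>i<(6::nat). P i) \<longleftrightarrow> P 0 \<and> P 1 \<and> P 2 \<and> P 3 \<and> P 4 \<and> P 5"
  by (simp add: eval_nat_numeral All_less_Suc2)

lemma quad_from_chain:
  assumes sc: "(s,cs) \<in> A" and sq2: "(s,q2) \<in> A" and csq2: "cs \<noteq> q2"
    and csq: "cs = q \<or> (is_reticulation V A cs \<and> (cs,q) \<in> A)"
    and qt: "is_tree_vertex V A q" and qc: "(q,cq)\<in>A" and qp2: "(q,p2)\<in>A" and cqp2: "cq \<noteq> p2"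
    and cqp: "cq = p \<or> (is_reticulation V A cq \<and> (cq,p)\<in>A)"
    and pt: "is_tree_vertex V A p" and pa: "(p,a)\<in>A" and pb: "(p,b)\<in>A" and ab: "a\<noteq>b"
  shows "\<exists>x1 x2 x3 x4. displays_quad V A X x1 x2 x3 x4"
proof -
  have sV: "s \<in> V" using sc inV1 by auto
  have qV: "q \<in> V" and q1: "indeg A q = 1" using qt tree_deg by auto
  have pV: "p \<in> V" and p1: "indeg A p = 1" using pt tree_deg by auto
  have sq: "(s,q) \<in> A\<^sup>+" using sc csq by auto
  have qp: "(q,p) \<in> A\<^sup>+" using qc cqp by auto
  have sp: "(s,p) \<in> A\<^sup>+" using sq qp by auto
  have pa': "(p,a) \<in> A\<^sup>+" "(p,b) \<in> A\<^sup>+" using pa pb by auto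
  have qa: "(q,a) \<in> A\<^sup>+" "(q,b) \<in> A\<^sup>+" "(q,p2) \<in> A\<^sup>+" using qp pa pb qp2 by auto
  have sa: "(s,a) \<in> A\<^sup>+" "(s,b) \<in> A\<^sup>+" "(s,p2) \<in> A\<^sup>+" "(s,q2) \<in> A\<^sup>+"
    using sq qa sq2 by auto
  obtain Ta where Ta: "tp a Ta" using tp_exists pa inV2 by blast
  obtain Tb where Tb: "tp b Tb" using tp_exists pb inV2 by blast
  obtain Tp where Tp: "tp p2 Tp" using tp_exists qp2 inV2 by blast
  obtain Tq where Tq: "tp q2 Tq" using tp_exists sq2 inV2 by blast
  have F4: "s \<notin> set Ta" "s \<notin> set Tb" "s \<notin> set Tp" "s \<notin> set Tq"
    using tp_notin_anc sa Ta Tb Tp Tq by blast+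
  have F4q: "q \<notin> set Ta" "q \<notin> set Tb" "q \<notin> set Tp"
    using tp_notin_anc qa Ta Tb Tp by blast+
  have F4p: "p \<notin> set Ta" "p \<notin> set Tb"
    using tp_notin_anc pa' Ta Tb by blast+
  have qq2: "q \<noteq> q2"
  proof
    assume e: "q = q2"
    show False
    proof (cases "cs = q")
      case True then show ?thesis using e csq2 by simp
    next
      case False
      then have "(cs,q) \<in> A" using csq by auto
      then have "cs = s" using indeg1_unique[OF q1] sq2 e by auto
      then show ?thesis using sc noloop by blast
    qed
  qed
  have F5: "q \<notin> set Tq"
  proof (cases "cs = q")
    case True then show ?thesis using tp_notin_par[OF Tq qq2 _ F4(4)] sc by auto
  next
    case False
    then have "(cs,q) \<in> A" "is_reticulation V A cs" using csq by auto
    then show ?thesis using tp_notin_par[OF Tq qq2] tp_notin_ret[OF Tq csq2] by blast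
  qed
  have pp2: "p \<noteq> p2"
  proof
    assume e: "p = p2"
    show False
    proof (cases "cq = p")
      case True then show ?thesis using e cqp2 by simp
    next
      case False
      then have "(cq,p) \<in> A" using cqp by auto
      then have "cq = q" using indeg1_unique[OF p1] qp2 e by auto
      then show ?thesis using qc noloop by blast
    qed
  qed
  have F6a: "p \<notin> set Tp"
  proof (cases "cq = p")
    case True then show ?thesis using tp_notin_par[OF Tp pp2 _ F4q(3)] qc by auto
  next
    case False
    then have "(cq,p) \<in> A" "is_reticulation V A cq" using cqp by auto
    then show ?thesis using tp_notin_par[OF Tp pp2] tp_notin_ret[OF Tp cqp2] by blast
  qed
  have cqq2: "cq \<noteq> q2"
  proof
    assume "cq = q2"
    then have "(s,cq) \<in> A" using sq2 by simp
    moreover have "s \<noteq> q" using sq noloop by blast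
    ultimately show False using NS2[OF _ qc _ sq] by blast
  qed
  have pq2: "p \<noteq> q2"
  proof
    assume e: "p = q2"
    show False
    proof (cases "cq = p")
      case True
      then have "s = q" using indeg1_unique[OF p1] sq2 qc e by auto
      then show ?thesis using sq noloop by blast
    next
      case False
      then have "(cq,p) \<in> A" using cqp by auto
      then have "s = cq" using indeg1_unique[OF p1] sq2 e by auto
      then have "(cq,q) \<in> A\<^sup>+" using sq by simp
      then show ?thesis using qc noloop by blast
    qed
  qed
  have F6b: "p \<notin> set Tq"
  proof (cases "cq = p")
    case True then show ?thesis using tp_notin_par[OF Tq pq2 _ F5] qc by auto
  next
    case False
    then have "(cq,p) \<in> A" "is_reticulation V A cq" using cqp by auto
    then show ?thesis using tp_notin_par[OF Tq pq2] tp_notin_ret[OF Tq cqq2] by blast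
  qed
  have H1: "cs \<noteq> q \<Longrightarrow> cs \<notin> set Ta \<and> cs \<notin> set Tb \<and> cs \<notin> set Tp \<and> cs \<notin> set Tq
      \<and> cs \<noteq> s \<and> cs \<noteq> p \<and> cs \<noteq> cq \<and> (cs,q) \<in> A \<and> is_reticulation V A cs"
  proof -
    assume ne: "cs \<noteq> q"
    then have c: "(cs,q) \<in> A" "is_reticulation V A cs" using csq by auto
    have "(cs,a) \<in> A\<^sup>+" "(cs,b) \<in> A\<^sup>+" "(cs,p2) \<in> A\<^sup>+" "(cs,p) \<in> A\<^sup>+" "(cs,cq) \<in> A\<^sup>+"
      using c qa qp qc by auto
    then show ?thesis using c tp_notin_anc[OF Ta] tp_notin_anc[OF Tb] tp_notin_anc[OF Tp]
        tp_notin_ret[OF Tq csq2] sc noloop by blast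
  qed
  have H2: "cq \<noteq> p \<Longrightarrow> cq \<notin> set Ta \<and> cq \<notin> set Tb \<and> cq \<notin> set Tp \<and> cq \<notin> set Tq
      \<and> cq \<noteq> s \<and> cq \<noteq> q \<and> (cq,p) \<in> A \<and> is_reticulation V A cq"
  proof -
    assume ne: "cq \<noteq> p"
    then have c: "(cq,p) \<in> A" "is_reticulation V A cq" using cqp by auto
    have "(cq,a) \<in> A\<^sup>+" "(cq,b) \<in> A\<^sup>+" "(s,cq) \<in> A\<^sup>+"
      using c pa pb sq qc by auto
    then show ?thesis using c tp_notin_anc[OF Ta] tp_notin_anc[OF Tb] tp_notin_ret[OF Tp cqp2]
        tp_notin_ret[OF Tq cqq2] qc noloop by blast
  qed
  have sqp: "s \<noteq> q" "s \<noteq> p" "q \<noteq> p" using noloop[OF sq] noloop[OF sp] noloop[OF qp] by auto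
  have st1: "a \<noteq> p2" using NS2[OF qp2 _ sqp(3) qp] pa by metis
  have st2: "b \<noteq> p2" using NS2[OF qp2 _ sqp(3) qp] pb by metis
  have st3: "a \<noteq> q2" using NS2[OF sq2 _ sqp(2) sp] pa by metis
  have st4: "b \<noteq> q2" using NS2[OF sq2 _ sqp(2) sp] pb by metis
  have st5: "p2 \<noteq> q2" using NS2[OF sq2 _ sqp(1) sq] qp2 by metis
  note st = st1 st2 st3 st4 st5
  have aTb: "a \<notin> set Tb" using tp_notin_par[OF Tb ab pa F4p(2)] .
  have bTa: "b \<notin> set Ta" using tp_notin_par[OF Ta ab[symmetric] pb F4p(1)] .
  have aTp: "a \<notin> set Tp" using tp_notin_par[OF Tp st(1) pa F6a] .
  have aTq: "a \<notin> set Tq" using tp_notin_par[OF Tq st(3) pa F6b] .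
  have bTp: "b \<notin> set Tp" using tp_notin_par[OF Tp st(2) pb F6a] .
  have bTq: "b \<notin> set Tq" using tp_notin_par[OF Tq st(4) pb F6b] .
  have pTa: "p2 \<notin> set Ta" using tp_notin_par[OF Ta st(1)[symmetric] qp2 F4q(1)] .
  have pTb: "p2 \<notin> set Tb" using tp_notin_par[OF Tb st(2)[symmetric] qp2 F4q(2)] .
  have pTq: "p2 \<notin> set Tq" using tp_notin_par[OF Tq st(5) qp2 F5] .
  have qTa: "q2 \<notin> set Ta" using tp_notin_par[OF Ta st(3)[symmetric] sq2 F4(1)] .
  have qTb: "q2 \<notin> set Tb" using tp_notin_par[OF Tb st(4)[symmetric] sq2 F4(2)] .
  have qTp: "q2 \<notin> set Tp" using tp_notin_par[OF Tp st(5)[symmetric] sq2 F4(3)] .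
  have D: "set Ta \<inter> set Tb = {}" "set Ta \<inter> set Tp = {}" "set Ta \<inter> set Tq = {}"
    "set Tb \<inter> set Tp = {}" "set Tb \<inter> set Tq = {}" "set Tp \<inter> set Tq = {}"
    using tp_disj[OF Ta Tb ab aTb bTa] tp_disj[OF Ta Tp st(1) aTp pTa] tp_disj[OF Ta Tq st(3) aTq qTa]
      tp_disj[OF Tb Tp st(2) bTp pTb] tp_disj[OF Tb Tq st(4) bTq qTb] tp_disj[OF Tp Tq st(5) pTq qTp]
    by auto
  obtain P3 where P3: "dpath A q p P3" "interior P3 = (if cq = p then {} else {cq})"
    using hop[OF qc, of p] cqp by auto
  obtain P5 where P5: "dpath A s q P5" "interior P5 = (if cs = q then {} else {cs})"
    using hop[OF sc, of q] csq by auto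
  have P1: "dpath A p (last Ta) (p # Ta)" using dpath_cons[OF pa F4p(1) tp_dpath[OF Ta]] .
  have P2: "dpath A p (last Tb) (p # Tb)" using dpath_cons[OF pb F4p(2) tp_dpath[OF Tb]] .
  have P4: "dpath A q (last Tp) (q # Tp)" using dpath_cons[OF qp2 F4q(3) tp_dpath[OF Tp]] .
  have P6: "dpath A s (last Tq) (s # Tq)" using dpath_cons[OF sq2 F4(4) tp_dpath[OF Tq]] .
  have I: "interior (p # Ta) = set (butlast Ta)" "interior (p # Tb) = set (butlast Tb)"
    "interior (q # Tp) = set (butlast Tp)" "interior (s # Tq) = set (butlast Tq)"
    using int_cons[of Ta p] int_cons[of Tb p] int_cons[of Tp q] int_cons[of Tq s]
      tp_hd[OF Ta] tp_hd[OF Tb] tp_hd[OF Tp] tp_hd[OF Tq] by auto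
  have BL: "last Ta \<notin> set (butlast Ta) \<and> set (butlast Ta) \<subseteq> set Ta \<and> last Ta \<in> set Ta"
    "last Tb \<notin> set (butlast Tb) \<and> set (butlast Tb) \<subseteq> set Tb \<and> last Tb \<in> set Tb"
    "last Tp \<notin> set (butlast Tp) \<and> set (butlast Tp) \<subseteq> set Tp \<and> last Tp \<in> set Tp"
    "last Tq \<notin> set (butlast Tq) \<and> set (butlast Tq) \<subseteq> set Tq \<and> last Tq \<in> set Tq"
    using butlast_facts[OF conjunct1[OF tp_hd[OF Ta]] tp_distinct[OF Ta]]
      butlast_facts[OF conjunct1[OF tp_hd[OF Tb]] tp_distinct[OF Tb]]
      butlast_facts[OF conjunct1[OF tp_hd[OF Tp]] tp_distinct[OF Tp]]
      butlast_facts[OF conjunct1[OF tp_hd[OF Tq]] tp_distinct[OF Tq]] by auto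
  have LX: "{last Ta, last Tb, last Tp, last Tq} \<subseteq> X" using tp_last[OF Ta] tp_last[OF Tb] tp_last[OF Tp] tp_last[OF Tq] by auto
  have qV: "q \<in> V" "p \<in> V" using qV pV by auto
  let ?Ps = "[p # Ta, p # Tb, P3, q # Tp, P5, s # Tq]"
  let ?K = "{s, q, p, last Ta, last Tb, last Tp, last Tq}"
  have J3: "interior P3 \<inter> (set Ta \<union> set Tb \<union> set Tp \<union> set Tq \<union> {s,q,p}) = {}"
    using P3(2) H2 by (cases "cq = p") auto
  have J5: "interior P5 \<inter> (set Ta \<union> set Tb \<union> set Tp \<union> set Tq \<union> {s,q,p}) = {}"
    using P5(2) H1 by (cases "cs = q") auto
  have J35: "interior P3 \<inter> interior P5 = {}"
    using P3(2) P5(2) H1 by (cases "cs = q"; cases "cq = p") auto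
  have B: "set Ta \<inter> {s,q,p} = {}" "set Tb \<inter> {s,q,p} = {}" "set Tp \<inter> {s,q,p} = {}"
     "set Tq \<inter> {s,q,p} = {}"
    using sqp F4 F4q F4p F5 F6a F6b by auto
  have L: "last Ta \<in> set Ta" "last Tb \<in> set Tb" "last Tp \<in> set Tp" "last Tq \<in> set Tq" using BL by auto
  have "last Ta \<noteq> last Tb" using dj_ne[OF D(1) L(1) L(2)] .
  moreover have "last Ta \<noteq> last Tp" using dj_ne[OF D(2) L(1) L(3)] .
  moreover have "last Ta \<noteq> last Tq" using dj_ne[OF D(3) L(1) L(4)] .
  moreover have "last Tb \<noteq> last Tp" using dj_ne[OF D(4) L(2) L(3)] .
  moreover have "last Tb \<noteq> last Tq" using dj_ne[OF D(5) L(2) L(4)] .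
  moreover have "last Tp \<noteq> last Tq" using dj_ne[OF D(6) L(3) L(4)] .
  moreover have "s \<noteq> last Ta" using F4(1) L(1) by auto
  moreover have "q \<noteq> last Ta" using F4q(1) L(1) by auto
  moreover have "p \<noteq> last Ta" using F4p(1) L(1) by auto
  moreover have "s \<noteq> last Tb" using F4(2) L(2) by auto
  moreover have "q \<noteq> last Tb" using F4q(2) L(2) by auto
  moreover have "p \<noteq> last Tb" using F4p(2) L(2) by auto
  moreover have "s \<noteq> last Tp" using F4(3) L(3) by auto
  moreover have "q \<noteq> last Tp" using F4q(3) L(3) by auto
  moreover have "p \<noteq> last Tp" using F6a L(3) by auto
  moreover have "s \<noteq> last Tq" using F4(4) L(4) by auto
  moreover have "q \<noteq> last Tq" using F5 L(4) by auto
  moreover have "p \<noteq> last Tq" using F6b L(4) by auto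
  note NE = calculation this
  have c1: "distinct [s, q, p, last Ta, last Tb, last Tp, last Tq]"
    using sqp NE by simp
  have E: "interior (?Ps ! 0) = set (butlast Ta)" "interior (?Ps ! 1) = set (butlast Tb)" "interior (?Ps ! 2) = interior P3" "interior (?Ps ! 3) = set (butlast Tp)" "interior (?Ps ! 4) = interior P5" "interior (?Ps ! 5) = set (butlast Tq)"
    using I by simp_all
  have K0: "set (butlast Ta) \<inter> ?K = {}" using BL(1) B(1) L D(1) D(2) D(3) by blast
  have K1: "set (butlast Tb) \<inter> ?K = {}" using BL(2) B(2) L D(1) D(4) D(5) by blast
  have K2: "interior P3 \<inter> ?K = {}" using J3 L by blast
  have K3: "set (butlast Tp) \<inter> ?K = {}" using BL(3) B(3) L D(2) D(4) D(6) by blast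
  have K4: "interior P5 \<inter> ?K = {}" using J5 L by blast
  have K5: "set (butlast Tq) \<inter> ?K = {}" using BL(4) B(4) L D(3) D(5) D(6) by blast
  have c3: "\<forall>i<6. interior (?Ps ! i) \<inter> ?K = {}"
    unfolding all6 E using K0 K1 K2 K3 K4 K5 by simp
  have Q01: "set (butlast Ta) \<inter> set (butlast Tb) = {}" using BL(1) BL(2) D(1) by blast
  have Q02: "set (butlast Ta) \<inter> interior P3 = {}" using BL(1) J3 by blast
  have Q03: "set (butlast Ta) \<inter> set (butlast Tp) = {}" using BL(1) BL(3) D(2) by blast
  have Q04: "set (butlast Ta) \<inter> interior P5 = {}" using BL(1) J5 by blast
  have Q05: "set (butlast Ta) \<inter> set (butlast Tq) = {}" using BL(1) BL(4) D(3) by blast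
  have Q12: "set (butlast Tb) \<inter> interior P3 = {}" using BL(2) J3 by blast
  have Q13: "set (butlast Tb) \<inter> set (butlast Tp) = {}" using BL(2) BL(3) D(4) by blast
  have Q14: "set (butlast Tb) \<inter> interior P5 = {}" using BL(2) J5 by blast
  have Q15: "set (butlast Tb) \<inter> set (butlast Tq) = {}" using BL(2) BL(4) D(5) by blast
  have Q23: "interior P3 \<inter> set (butlast Tp) = {}" using BL(3) J3 by blast
  have Q24: "interior P3 \<inter> interior P5 = {}" using J35 by blast
  have Q25: "interior P3 \<inter> set (butlast Tq) = {}" using BL(4) J3 by blast
  have Q34: "set (butlast Tp) \<inter> interior P5 = {}" using BL(3) J5 by blast
  have Q35: "set (butlast Tp) \<inter> set (butlast Tq) = {}" using BL(3) BL(4) D(6) by blast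
  have Q45: "interior P5 \<inter> set (butlast Tq) = {}" using BL(4) J5 by blast
  have c2: "\<forall>i<6. \<forall>j<6. i \<noteq> j \<longrightarrow> interior (?Ps ! i) \<inter> interior (?Ps ! j) = {}"
    unfolding all6 E using Q01 Q02 Q03 Q04 Q05 Q12 Q13 Q14 Q15 Q23 Q24 Q25 Q34 Q35 Q45 by (simp add: Int_commute)
  have "displays_quad V A X (last Ta) (last Tb) (last Tp) (last Tq)"
    unfolding displays_quad_def Let_def using LX sV qV c1 c2 c3 P1 P2 P3(1) P4 P5(1) P6 by blast
  then show ?thesis by blast
qed

definition OV :: "'v set" where "OV = {v \<in> V. outdeg A v = 2}"

definition g :: "'v \<Rightarrow> 'v \<Rightarrow> bool" where
  "g u v \<longleftrightarrow> u \<in> OV \<and> v \<in> OV \<and> ((u,v) \<in> A \<or> (\<exists>h. (u,h)\<in>A \<and> is_reticulation V A h \<and> (h,v) \<in> A))"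

lemma rO: "r \<in> OV" using rV r2 unfolding OV_def by auto

lemma finO: "finite OV" using finV unfolding OV_def by auto

lemma par_kind: "(w,u) \<in> A \<Longrightarrow> w \<in> OV \<or> is_reticulation V A w"
proof -
  assume a: "(w,u) \<in> A"
  have "w \<in> V" "w \<notin> X" using a inV1 has_child_not_X by auto
  then show ?thesis using kinds[of w] rO tree_deg[of w] unfolding OV_def by (cases "w = r") auto
qed

lemma O_kind: "u \<in> OV \<Longrightarrow> u = r \<or> is_tree_vertex V A u"
proof -
  assume a: "u \<in> OV"
  then have "u \<in> V" "outdeg A u = 2" unfolding OV_def by auto
  moreover then have "u \<notin> X" using Xdef by auto
  ultimately show ?thesis using kinds[of u] ret_deg[of u] by force
qed

lemma ret_par_O: "is_reticulation V A h \<Longrightarrow> (w,h)\<in>A \<Longrightarrow> w \<in> OV"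
proof (rule ccontr)
  assume a: "is_reticulation V A h" "(w,h)\<in>A" "w \<notin> OV"
  then have rw: "is_reticulation V A w" using par_kind by blast
  have "w \<in> V - X" using a inV1 has_child_not_X by auto
  then obtain c where c: "(w,c) \<in> A" "is_tree_vertex V A c \<or> c \<in> X" using tc by blast
  have "c = h" using outdeg1_unique[OF _ c(1) a(2)] ret_deg[OF rw] by auto
  then show False using c a(1) ret_deg tree_deg has_child_not_X Xdef
    by (metis (mono_tags, lifting) X1 numeral_eq_one_iff semiring_norm(85))
qed

lemma O_par: "u \<in> OV \<Longrightarrow> u \<noteq> r \<Longrightarrow> \<exists>w. g w u"
proof -
  assume a: "u \<in> OV" "u \<noteq> r"
  then have t: "is_tree_vertex V A u" using O_kind by auto
  then have "{w. (w,u) \<in> A} \<noteq> {}" using tree_deg unfolding indeg_def by fastforce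
  then obtain w where w: "(w,u) \<in> A" by blast
  show ?thesis
  proof (cases "w \<in> OV")
    case True then show ?thesis using w a unfolding g_def by blast
  next
    case False
    then have rw: "is_reticulation V A w" using par_kind w by blast
    then have "{w2. (w2,w) \<in> A} \<noteq> {}" using ret_deg unfolding indeg_def by fastforce
    then obtain w2 where w2: "(w2,w) \<in> A" by blast
    then have "w2 \<in> OV" using ret_par_O rw by blast
    then show ?thesis using w w2 rw a unfolding g_def by blast
  qed
qed

lemma nochain_r: "\<not>(\<exists>s q p. g s q \<and> g q p) \<Longrightarrow> u \<in> OV \<Longrightarrow> u \<noteq> r \<Longrightarrow> g r u"
proof -
  assume nc: "\<not>(\<exists>s q p. g s q \<and> g q p)" and u: "u \<in> OV" "u \<noteq> r"
  obtain w where w: "g w u" using O_par u by blast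
  show ?thesis
  proof (cases "w = r")
    case True then show ?thesis using w by simp
  next
    case False
    have "w \<in> OV" using w unfolding g_def by auto
    then obtain w' where "g w' w" using O_par False by blast
    then show ?thesis using nc w by blast
  qed
qed

lemma card_gr: "card {u. g r u} \<le> 2"
proof -
  let ?C = "{c. (r,c) \<in> A}"
  define F where "F c = (if is_reticulation V A c then {v. (c,v) \<in> A} else {c})" for c
  have sub: "{u. g r u} \<subseteq> (\<Union>c\<in>?C. F c)" unfolding g_def F_def using ret_deg unfolding OV_def by force
  have finC: "finite ?C" using fin_ch by simp
  have cF: "\<And>c. card (F c) \<le> 1" unfolding F_def using ret_deg unfolding outdeg_def by auto
  have finF: "\<And>c. finite (F c)" unfolding F_def using fin_ch by auto
  have "card {u. g r u} \<le> card (\<Union>c\<in>?C. F c)" by (rule card_mono[OF _ sub]) (use finC finF in auto)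
  also have "\<dots> \<le> (\<Sum>c\<in>?C. card (F c))" by (rule card_UN_le[OF finC])
  also have "\<dots> \<le> (\<Sum>c\<in>?C. 1)" by (rule sum_mono) (use cF in auto)
  also have "\<dots> = 2" using r2 unfolding outdeg_def by simp
  finally show ?thesis .
qed

lemma card_O_nochain: "\<not>(\<exists>s q p. g s q \<and> g q p) \<Longrightarrow> card OV \<le> 3"
proof -
  assume nc: "\<not>(\<exists>s q p. g s q \<and> g q p)"
  have "OV \<subseteq> insert r {u. g r u}" using nochain_r[OF nc] by auto
  moreover have "finite {u. g r u}" using finO unfolding g_def by (auto intro: finite_subset)
  ultimately have "card OV \<le> card (insert r {u. g r u})" by (intro card_mono) auto
  also have "\<dots> \<le> Suc (card {u. g r u})" using \<open>finite {u. g r u}\<close> by (simp add: card_insert_if)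
  finally show ?thesis using card_gr by simp
qed

lemma V_part: "V = OV \<union> reticulations V A \<union> X"
  and disj: "OV \<inter> reticulations V A = {}" "OV \<inter> X = {}" "reticulations V A \<inter> X = {}"
proof -
  show "V = OV \<union> reticulations V A \<union> X"
  proof
    show "V \<subseteq> OV \<union> reticulations V A \<union> X"
    proof
      fix v assume v: "v \<in> V"
      show "v \<in> OV \<union> reticulations V A \<union> X"
        using kinds[of v] v rO tree_deg[of v] unfolding OV_def reticulations_def by (cases "v = r") auto
    qed
    show "OV \<union> reticulations V A \<union> X \<subseteq> V" using Xdef ret_deg unfolding OV_def reticulations_def by auto
  qed
  show "OV \<inter> reticulations V A = {}" "OV \<inter> X = {}" "reticulations V A \<inter> X = {}"
    using ret_deg Xdef unfolding OV_def reticulations_def by auto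
qed

lemma finR: "finite (reticulations V A)" and finX: "finite X"
  using V_part finV by (metis finite_Un)+

lemma sum_part: "sum f V = sum f OV + sum f (reticulations V A) + sum f X"
proof -
  have "sum f V = sum f (OV \<union> reticulations V A \<union> X)" using V_part by simp
  also have "\<dots> = sum f (OV \<union> reticulations V A) + sum f X"
    by (rule sum.union_disjoint) (use finO finR finX disj in auto)
  also have "sum f (OV \<union> reticulations V A) = sum f OV + sum f (reticulations V A)"
    by (rule sum.union_disjoint) (use finO finR disj in auto)
  finally show ?thesis .
qed

lemma card_conv: "card (S\<inverse>) = card S"
proof -
  have "S\<inverse> = (\<lambda>(x,y). (y,x)) ` S" by auto
  moreover have "inj_on (\<lambda>(x,y). (y,x)) S" by (auto simp: inj_on_def)
  ultimately show ?thesis by (simp add: card_image)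
qed

lemma handshake: "card X + card OV + 2 * card (reticulations V A) = 2 * card OV + card (reticulations V A) + 1"
proof -
  let ?R = "reticulations V A"
  have e1: "A = (SIGMA v:V. {w. (v,w) \<in> A})" using AV by auto
  have "card (SIGMA v:V. {w. (v,w) \<in> A}) = (\<Sum>v\<in>V. card {w. (v,w) \<in> A})"
    by (rule card_SigmaI) (use finV fin_ch in auto)
  then have o0: "card A = (\<Sum>v\<in>V. outdeg A v)" unfolding outdeg_def using arg_cong[where f=card, OF e1] by simp
  have s1: "(\<Sum>v\<in>OV. outdeg A v) = (\<Sum>v\<in>OV. 2)" by (rule sum.cong) (auto simp: OV_def)
  have s2: "(\<Sum>v\<in>?R. outdeg A v) = (\<Sum>v\<in>?R. 1)" by (rule sum.cong) (auto simp: reticulations_def is_reticulation_def)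
  have s3: "(\<Sum>v\<in>X. outdeg A v) = (\<Sum>v\<in>X. 0)" by (rule sum.cong) (use Xdef in auto)
  have o: "card A = 2 * card OV + card ?R" using o0 sum_part[of "outdeg A"] s1 s2 s3 by simp
  have e2: "A\<inverse> = (SIGMA v:V. {u. (u,v) \<in> A})" using AV by auto
  have "card (SIGMA v:V. {u. (u,v) \<in> A}) = (\<Sum>v\<in>V. card {u. (u,v) \<in> A})"
    by (rule card_SigmaI) (use finV fin_par in auto)
  then have i0: "card A = (\<Sum>v\<in>V. indeg A v)" unfolding indeg_def
    using arg_cong[where f=card, OF e2] card_conv[of A] by simp
  have t1: "(\<Sum>v\<in>OV. indeg A v) = indeg A r + (\<Sum>v\<in>OV - {r}. indeg A v)"
    by (rule sum.remove[OF finO rO])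
  have t2: "(\<Sum>v\<in>OV - {r}. indeg A v) = (\<Sum>v\<in>OV - {r}. 1)"
    by (rule sum.cong) (use O_kind tree_deg in auto)
  have t3: "(\<Sum>v\<in>?R. indeg A v) = (\<Sum>v\<in>?R. 2)" by (rule sum.cong) (auto simp: reticulations_def is_reticulation_def)
  have t4: "(\<Sum>v\<in>X. indeg A v) = (\<Sum>v\<in>X. 1)" by (rule sum.cong) (use X1 in auto)
  have i: "card A = card (OV - {r}) + 2 * card ?R + card X"
    using i0 sum_part[of "indeg A"] t1 t2 t3 t4 r0 by simp
  have "card (OV - {r}) + 1 = card OV" using rO finO
    by (metis One_nat_def add.right_neutral add_Suc_right card_Suc_Diff1)
  then show ?thesis using o i by linarith
qed

lemma ret_count: "2 * card (reticulations V A) \<le> card OV"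
proof -
  let ?R = "reticulations V A"
  let ?E = "{(u,h). (u,h) \<in> A \<and> is_reticulation V A h}"
  have eE: "?E\<inverse> = (SIGMA h:?R. {u. (u,h) \<in> A})" unfolding reticulations_def by auto
  have "card ?E = card (?E\<inverse>)" by (rule card_conv[symmetric])
  also have "\<dots> = (\<Sum>h\<in>?R. indeg A h)" unfolding indeg_def eE
    by (rule card_SigmaI[OF finR]) (use fin_par in auto)
  also have "\<dots> = 2 * card ?R" using ret_deg unfolding reticulations_def by simp
  finally have c: "card ?E = 2 * card ?R" .
  have inj: "inj_on fst ?E"
  proof (rule inj_onI)
    fix x y assume x: "x \<in> ?E" and y: "y \<in> ?E" and f: "fst x = fst y"
    obtain u h where xe: "x = (u,h)" "(u,h) \<in> A" "is_reticulation V A h" using x by auto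
    obtain h' where ye: "y = (u,h')" "(u,h') \<in> A" "is_reticulation V A h'" using y f xe by (cases y) auto
    have uO: "u \<in> OV" using ret_par_O xe by blast
    have "u \<in> V - X" using xe inV1 has_child_not_X by auto
    then obtain c where c: "(u,c) \<in> A" "is_tree_vertex V A c \<or> c \<in> X" using tc by blast
    have "c \<noteq> h" "c \<noteq> h'" using c xe ye ret_deg tree_deg X1 by fastforce+
    then have "h = h'" using outdeg2_at_most[of u c h h'] uO c xe ye unfolding OV_def by auto
    then show "x = y" using xe ye by simp
  qed
  have "fst ` ?E \<subseteq> OV" using ret_par_O by auto
  then have "card ?E \<le> card OV" using card_inj_on_le[OF inj _ finO] by blast
  then show ?thesis using c by simp
qed

lemma O_tree: "u \<in> OV \<Longrightarrow> (w,u) \<in> A \<Longrightarrow> is_tree_vertex V A u"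
  using O_kind has_par_not_r by blast

lemma two_children: "outdeg A v = 2 \<Longrightarrow> \<exists>a b. (v,a)\<in>A \<and> (v,b)\<in>A \<and> a\<noteq>b"
  unfolding outdeg_def card_2_iff by blast

lemma chain_quad: "g s q \<Longrightarrow> g q p \<Longrightarrow> \<exists>x1 x2 x3 x4. displays_quad V A X x1 x2 x3 x4"
proof -
  assume g1: "g s q" and g2: "g q p"
  obtain cs where cs: "(s,cs) \<in> A" "cs = q \<or> (is_reticulation V A cs \<and> (cs,q) \<in> A)"
    using g1 unfolding g_def by blast
  obtain cq where cq: "(q,cq) \<in> A" "cq = p \<or> (is_reticulation V A cq \<and> (cq,p) \<in> A)"
    using g2 unfolding g_def by blast
  have sO: "s \<in> OV" "q \<in> OV" "p \<in> OV" using g1 g2 unfolding g_def by auto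
  obtain q2 where q2: "(s,q2) \<in> A" "q2 \<noteq> cs" using outdeg2_other[OF _ cs(1)] sO unfolding OV_def by auto
  obtain p2 where p2: "(q,p2) \<in> A" "p2 \<noteq> cq" using outdeg2_other[OF _ cq(1)] sO unfolding OV_def by auto
  have qt: "is_tree_vertex V A q" using O_tree[OF sO(2)] cs by blast
  have pt: "is_tree_vertex V A p" using O_tree[OF sO(3)] cq by blast
  obtain a b where ab: "(p,a)\<in>A" "(p,b)\<in>A" "a\<noteq>b" using two_children sO unfolding OV_def by blast
  show ?thesis
    by (rule quad_from_chain[OF cs(1) q2(1) q2(2)[symmetric] cs(2) qt cq(1) p2(1) p2(2)[symmetric] cq(2) pt ab])
qed

end

theorem mainTheorem8:
  fixes V :: "'v set" and A :: "('v \<times> 'v) set" and r :: 'v and X :: "'v set"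
  assumes "normal_network V A r X"
    and "(card (reticulations V A) \<ge> 1 \<and> card X \<ge> 4)
         \<or> card (reticulations V A) \<ge> 2 \<or> card X \<ge> 5"
  shows "\<exists>x1 x2 x3 x4. displays_quad V A X x1 x2 x3 x4"
proof -
  interpret nn V A r X by unfold_locales (rule assms(1))
  show ?thesis
  proof (cases "\<exists>s q p. g s q \<and> g q p")
    case True then show ?thesis using chain_quad by blast
  next
    case False
    have "card OV \<le> 3" by (rule card_O_nochain[OF False])
    then show ?thesis using handshake ret_count assms(2) by linarith
  qed
qed

end
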